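(* Under the standing assumptions described in the context, there is a constant $C>0$ independent of $\varepsilon$ such that $$\mathrm d_\varepsilon(\mathcal A_\varepsilon,E_\varepsilon\mathcal A_0)\le C(\tau(\varepsilon)+\rho(\varepsilon))+\mathrm d_\varepsilon(Q_\varepsilon\mathcal A_\varepsilon,E_\varepsilon\mathcal A_0).$$
   Context: Fix $\alpha\in(0,1)$, $\varepsilon_0>0$. $X_0$ is a real Hilbert space of finite dimension $n$, $A_0:X_0\to X_0$ an invertible bounded linear operator with spectrum $\{\lambda_1^0<\cdots<\lambda_n^0\}$, $\lambda_1^0>0$. For $\varepsilon\in(0,\varepsilon_0]$, $X_\varepsilon$ is a separable Hilbert space and $A_\varepsilon$ a positive self-adjoint invertible operator in $X_\varepsilon$ with compact resolvent, distinct eigenvalues $0<\lambda_1^\varepsilon<\lambda_2^\varepsilon<\cdots$, orthonormal eigenfunctions $\varphi_j^\varepsilon$; $X_\varepsilon^\alpha=D(A_\varepsilon^\alpha)$ with $\|u\|_{X_\varepsilon^\alpha}=\|A_\varepsilon^\alpha u\|_{X_\varepsilon}$. Bounded linear maps $E_\varepsilon:X_0\to X_\varepsilon^\alpha$, $M_\varepsilon:X_\varepsilon\to X_0$ satisfy $M_\varepsilon E_\varepsilon=I$, $\|E_\varepsilon u\|_{X_\varepsilon}\to\|u\|_{X_0}$, with norms bounded independently of $\varepsilon$. $A_\varepsilon^{-1}$ converges compactly to $A_0^{-1}$ (E-convergence $u^\varepsilon\to u^0$, meaning $\|u^\varepsilon-E_\varepsilon u^0\|_{X_\varepsilon^\alpha}\to0$,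 is preserved by the resolvents, and images of unit-norm families under $A_\varepsilon^{-1}$ are relatively compact for this convergence). Increasing $\tau,\rho$ with $\tau(0)=\rho(0)=0$ satisfy $\|A_\varepsilon^{-1}-E_\varepsilon A_0^{-1}M_\varepsilon\|_{\mathcal L(X_\varepsilon,X_\varepsilon^\alpha)}\le\tau(\varepsilon)$ and $\|f_\varepsilon(u^\varepsilon)-E_\varepsilon f_0(u^0)\|_{X_\varepsilon}\le C\|u^\varepsilon-E_\varepsilon u^0\|_{X_\varepsilon^\alpha}+\rho(\varepsilon)$, where $f_0:X_0\to X_0$, $f_\varepsilon:X_\varepsilon^\alpha\to X_\varepsilon$ are $C^1$, uniformly bounded, uniformly Lipschitz. $\mathcal A_\varepsilon$ is the global attractor (uniformly bounded in $X_\varepsilon^\alpha$) of the semigroup generated by $u_t+A_\varepsilon u=f_\varepsilon(u)$ in $X_\varepsilon^\alpha$, and $\mathcal A_0$ that of $\dot u+A_0u=f_0(u)$ in $X_0$. $Q_\varepsilon$ is the orthogonal projection of $X_\varepsilon$ onto $\mathrm{span}[\varphi_1^\varepsilon,\dots,\varphi_n^\varepsilon]$ (equivalently the Riesz spectral projection of $A_\varepsilon$ associated with a contour enclosing $-\lambda_1^0,\dots,-\lambda_n^0$ for $-A_\varepsilon$). $\mathrm d_\varepsilon$ is the symmetric Hausdorff distance in $X_\varepsilon^\alpha$: $\mathrm d_\varepsilon(A,B)=\max\{\sup_{a\in A}\inf_{b\in B}\|a-b\|_{X_\varepsilon^\alpha},\sup_{b\in B}\inf_{a\in A}\|a-b\|_{X_\varepsilon^\alpha}\}$.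 *)

theory Defs
  imports "HOL-Analysis.Analysis"
begin

text \<open>Spectral data of a positive self-adjoint operator with compact resolvent in a
separable Hilbert space: eigenvalues lam 0 < lam 1 < ... (tending to infinity) and a
complete orthonormal system of eigenvectors p 0, p 1, ... . The operator and its
fractional powers are given by their spectral expansions.\<close>

definition orthonormal_basis_seq :: "(nat \<Rightarrow> 'b::real_inner) \<Rightarrow> bool" where
  "orthonormal_basis_seq p \<longleftrightarrow>
     (\<forall>i j. p i \<bullet> p j = (if i = j then 1 else 0)) \<and>
     (\<forall>u. (\<lambda>j. (u \<bullet> p j) *\<^sub>R p j) sums u)"

definition in_Xalpha :: "(nat \<Rightarrow> real) \<Rightarrow> (nat \<Rightarrow> 'b::real_inner) \<Rightarrow> real \<Rightarrow> 'b \<Rightarrow> bool" where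
  "in_Xalpha lam p a u \<longleftrightarrow> summable (\<lambda>j. (lam j powr a * (u \<bullet> p j))\<^sup>2)"

definition alpha_norm :: "(nat \<Rightarrow> real) \<Rightarrow> (nat \<Rightarrow> 'b::real_inner) \<Rightarrow> real \<Rightarrow> 'b \<Rightarrow> real" where
  "alpha_norm lam p a u = sqrt (\<Sum>j. (lam j powr a * (u \<bullet> p j))\<^sup>2)"

definition op_inv :: "(nat \<Rightarrow> real) \<Rightarrow> (nat \<Rightarrow> 'b::real_inner) \<Rightarrow> 'b \<Rightarrow> 'b" where
  "op_inv lam p u = (\<Sum>j. (u \<bullet> p j / lam j) *\<^sub>R p j)"

definition op_sgrp :: "(nat \<Rightarrow> real) \<Rightarrow> (nat \<Rightarrow> 'b::real_inner) \<Rightarrow> real \<Rightarrow> 'b \<Rightarrow> 'b" where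
  "op_sgrp lam p t u = (\<Sum>j. (exp (- lam j * t) * (u \<bullet> p j)) *\<^sub>R p j)"

definition proj_first :: "(nat \<Rightarrow> 'b::real_inner) \<Rightarrow> nat \<Rightarrow> 'b \<Rightarrow> 'b" where
  "proj_first p n u = (\<Sum>j<n. (u \<bullet> p j) *\<^sub>R p j)"

definition hausd :: "('b::real_vector \<Rightarrow> real) \<Rightarrow> 'b set \<Rightarrow> 'b set \<Rightarrow> real" where
  "hausd N A B = max (SUP a\<in>A. INF b\<in>B. N (a - b)) (SUP b\<in>B. INF a\<in>A. N (a - b))"

definition C1_wrt :: "('b::real_normed_vector \<Rightarrow> bool) \<Rightarrow> ('b \<Rightarrow> real) \<Rightarrow> ('b \<Rightarrow> 'b) \<Rightarrow> bool" where
  "C1_wrt S N f \<longleftrightarrow> (\<exists>D :: 'b \<Rightarrow> 'b \<Rightarrow> 'b.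
     (\<forall>u. S u \<longrightarrow>
        linear (D u) \<and> (\<exists>K. \<forall>h. S h \<longrightarrow> norm (D u h) \<le> K * N h) \<and>
        (\<forall>e>0. \<exists>d>0. \<forall>h. S h \<and> N h < d \<longrightarrow> norm (f (u + h) - f u - D u h) \<le> e * N h)) \<and>
     (\<forall>u. S u \<longrightarrow> (\<forall>e>0. \<exists>d>0. \<forall>v. S v \<and> N (v - u) < d \<longrightarrow>
        (\<forall>h. S h \<longrightarrow> norm (D v h - D u h) \<le> e * N h))))"

text \<open>Mild solution of u_t + A u = f(u) in X^alpha on [0,infinity) with u(0) = u0
(variation of constants formula).\<close>
definition mild_sol :: "(nat \<Rightarrow> real) \<Rightarrow> (nat \<Rightarrow> 'b::{real_inner,complete_space}) \<Rightarrow> real \<Rightarrow>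
    ('b \<Rightarrow> 'b) \<Rightarrow> 'b \<Rightarrow> (real \<Rightarrow> 'b) \<Rightarrow> bool" where
  "mild_sol lam p a f u0 u \<longleftrightarrow>
     u 0 = u0 \<and> (\<forall>t\<ge>0. in_Xalpha lam p a (u t)) \<and>
     (\<forall>t\<ge>0. \<forall>e>0. \<exists>d>0. \<forall>s\<ge>0. \<bar>s - t\<bar> < d \<longrightarrow> alpha_norm lam p a (u s - u t) < e) \<and>
     (\<forall>t\<ge>0. ((\<lambda>s. op_sgrp lam p (t - s) (f (u s))) has_integral (u t - op_sgrp lam p t u0)) {0..t})"

definition ode_sol :: "('a::real_normed_vector \<Rightarrow> 'a) \<Rightarrow> ('a \<Rightarrow> 'a) \<Rightarrow> 'a \<Rightarrow> (real \<Rightarrow> 'a) \<Rightarrow> bool" where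
  "ode_sol A0 f0 u0 u \<longleftrightarrow>
     u 0 = u0 \<and> (\<forall>t\<ge>0. (u has_vector_derivative (f0 (u t) - A0 (u t))) (at t within {0..}))"

definition global_attractor :: "('x::real_vector \<Rightarrow> real) \<Rightarrow> ('x \<Rightarrow> bool) \<Rightarrow>
    ('x \<Rightarrow> (real \<Rightarrow> 'x) \<Rightarrow> bool) \<Rightarrow> 'x set \<Rightarrow> bool" where
  "global_attractor N S sol A \<longleftrightarrow>
     (\<forall>u0. S u0 \<longrightarrow> (\<exists>u. sol u0 u) \<and>
        (\<forall>u v. sol u0 u \<and> sol u0 v \<longrightarrow> (\<forall>t\<ge>0. u t = v t))) \<and>
     A \<subseteq> Collect S \<and>
     (\<forall>x :: nat \<Rightarrow> 'x. (\<forall>k. x k \<in> A) \<longrightarrow>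
        (\<exists>r a. strict_mono r \<and> a \<in> A \<and> (\<lambda>k. N (x (r k) - a)) \<longlonglongrightarrow> 0)) \<and>
     (\<forall>a\<in>A. \<forall>u. sol a u \<longrightarrow> (\<forall>t\<ge>0. u t \<in> A)) \<and>
     (\<forall>a\<in>A. \<forall>t\<ge>0. \<exists>b\<in>A. \<exists>u. sol b u \<and> u t = a) \<and>
     (\<forall>B. B \<subseteq> Collect S \<and> (\<exists>K. \<forall>b\<in>B. N b \<le> K) \<longrightarrow>
        (\<forall>e>0. \<exists>T. \<forall>b\<in>B. \<forall>u. sol b u \<longrightarrow> (\<forall>t\<ge>T. \<exists>a\<in>A. N (u t - a) < e)))"

end

theory Submission
  imports Defs
begin
definition onrm :: "(nat \<Rightarrow> 'b::real_inner) \<Rightarrow> bool" where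
  "onrm p \<longleftrightarrow> (\<forall>i j. p i \<bullet> p j = (if i = j then 1 else 0))"

lemma onb_onrm: "orthonormal_basis_seq p \<Longrightarrow> onrm p"
  by (simp add: orthonormal_basis_seq_def onrm_def)

lemma fin_coord:
  assumes "onrm p" "finite F"
  shows "(\<Sum>j\<in>F. c j *\<^sub>R p j) \<bullet> p k = (if k \<in> F then c k else 0)"
proof -
  have "(\<Sum>j\<in>F. c j *\<^sub>R p j) \<bullet> p k = (\<Sum>j\<in>F. if j = k then c k else 0)"
    unfolding inner_sum_left using assms(1) by (intro sum.cong) (auto simp: onrm_def)
  also have "\<dots> = (if k \<in> F then c k else 0)" using assms(2) by (simp add: sum.delta')
  finally show ?thesis .
qed

lemma fin_norm2:
  assumes "onrm p" "finite F"
  shows "(norm (\<Sum>j\<in>F. c j *\<^sub>R p j))\<^sup>2 = (\<Sum>j\<in>F. (c j)\<^sup>2)"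
proof -
  let ?y = "\<Sum>j\<in>F. c j *\<^sub>R p j"
  have "(norm ?y)\<^sup>2 = ?y \<bullet> ?y" by (simp add: power2_norm_eq_inner)
  also have "\<dots> = (\<Sum>j\<in>F. c j * (p j \<bullet> ?y))" by (simp add: inner_sum_left)
  also have "\<dots> = (\<Sum>j\<in>F. (c j)\<^sup>2)"
    using fin_coord[OF assms] by (intro sum.cong) (auto simp: inner_commute power2_eq_square)
  finally show ?thesis .
qed

lemma bessel_fin:
  assumes "onrm p" "finite F"
  shows "(\<Sum>j\<in>F. (x \<bullet> p j)\<^sup>2) \<le> (norm x)\<^sup>2"
proof -
  let ?y = "\<Sum>j\<in>F. (x \<bullet> p j) *\<^sub>R p j"
  have xy: "x \<bullet> ?y = (\<Sum>j\<in>F. (x \<bullet> p j)\<^sup>2)" by (simp add: inner_sum_right power2_eq_square)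
  have yy: "?y \<bullet> ?y = (\<Sum>j\<in>F. (x \<bullet> p j)\<^sup>2)"
    using fin_norm2[OF assms, of "\<lambda>j. x \<bullet> p j"] by (simp add: power2_norm_eq_inner)
  have "0 \<le> (x - ?y) \<bullet> (x - ?y)" by simp
  also have "\<dots> = x \<bullet> x - 2 * (x \<bullet> ?y) + ?y \<bullet> ?y" by (simp add: algebra_simps inner_commute)
  finally show ?thesis using xy yy by (simp add: power2_norm_eq_inner)
qed

lemma coef_sq_summable:
  assumes "onrm p"
  shows "summable (\<lambda>j. (x \<bullet> p j)\<^sup>2)"
proof (rule summableI_nonneg_bounded)
  show "\<And>n. (\<Sum>j<n. (x \<bullet> p j)\<^sup>2) \<le> (norm x)\<^sup>2" using bessel_fin[OF assms] by simp
qed simp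

lemma summable_Cauchy_cs:
  fixes f :: "nat \<Rightarrow> 'a::{real_normed_vector,complete_space}"
  assumes r: "\<forall>e>0. \<exists>N. \<forall>m\<ge>N. \<forall>n. norm (sum f {m..<n}) < e"
  shows "summable f"
    unfolding summable_iff_convergent Cauchy_convergent_iff [symmetric] Cauchy_iff
  proof clarify
    fix e :: real
    assume "0 < e"
    with r obtain N where N: "\<And>m n. m \<ge> N \<Longrightarrow> norm (sum f {m..<n}) < e"
      by blast
    have "norm (sum f {..<m} - sum f {..<n}) < e" if "m\<ge>N" "n\<ge>N" for m n
    proof (cases m n rule: linorder_class.le_cases)
      assume "m \<le> n"
      then show ?thesis
        by (metis N finite_lessThan lessThan_minus_lessThan lessThan_subset_iff norm_minus_commute sum_diff \<open>m\<ge>N\<close>)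
    next
      assume "n \<le> m"
      then show ?thesis
        by (metis N finite_lessThan lessThan_minus_lessThan lessThan_subset_iff sum_diff \<open>n\<ge>N\<close>)
    qed
    then show "\<exists>M. \<forall>m\<ge>M. \<forall>n\<ge>M. norm (sum f {..<m} - sum f {..<n}) < e"
      by blast
  qed

lemma coef_series:
  fixes p :: "nat \<Rightarrow> 'b::{real_inner,complete_space}"
  assumes op: "onrm p" and d: "\<And>j. \<bar>d j\<bar> \<le> \<bar>x \<bullet> p j\<bar>"
  shows "summable (\<lambda>j. d j *\<^sub>R p j)" "(\<Sum>j. d j *\<^sub>R p j) \<bullet> p k = d k"
proof -
  have sx: "summable (\<lambda>j. (x \<bullet> p j)\<^sup>2)" by (rule coef_sq_summable[OF op])
  show sm: "summable (\<lambda>j. d j *\<^sub>R p j)"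
  proof (rule summable_Cauchy_cs, intro allI impI)
    fix e :: real assume e: "e > 0"
    from sx[unfolded summable_Cauchy] e obtain N where N: "\<And>m n. m \<ge> N \<Longrightarrow> norm (\<Sum>j\<in>{m..<n}. (x \<bullet> p j)\<^sup>2) < e\<^sup>2"
      by (metis zero_less_power)
    show "\<exists>N. \<forall>m\<ge>N. \<forall>n. norm (\<Sum>j\<in>{m..<n}. d j *\<^sub>R p j) < e"
    proof (intro exI allI impI)
      fix m n assume m: "m \<ge> N"
      have "(norm (\<Sum>j\<in>{m..<n}. d j *\<^sub>R p j))\<^sup>2 = (\<Sum>j\<in>{m..<n}. (d j)\<^sup>2)"
        by (rule fin_norm2[OF op]) simp
      also have "\<dots> \<le> (\<Sum>j\<in>{m..<n}. (x \<bullet> p j)\<^sup>2)"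
        by (intro sum_mono) (metis abs_ge_zero d power2_abs power_mono)
      also have "\<dots> < e\<^sup>2" using N[OF m, of n] by (simp add: sum_nonneg)
      finally show "norm (\<Sum>j\<in>{m..<n}. d j *\<^sub>R p j) < e"
        using e by (meson norm_ge_zero power_less_imp_less_base less_imp_le)
    qed
  qed
  have "(\<lambda>j. (d j *\<^sub>R p j) \<bullet> p k) sums ((\<Sum>j. d j *\<^sub>R p j) \<bullet> p k)"
    by (rule bounded_linear.sums[OF bounded_linear_inner_left summable_sums[OF sm]])
  moreover have "(\<lambda>j. (d j *\<^sub>R p j) \<bullet> p k) = (\<lambda>j. if j = k then d j else 0)"
    using op by (auto simp: onrm_def)
  ultimately show "(\<Sum>j. d j *\<^sub>R p j) \<bullet> p k = d k"
    using sums_single[of k d] sums_unique2 by metis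
qed

lemma seq_l2_tri:
  fixes x y :: "nat \<Rightarrow> real"
  assumes sx: "summable (\<lambda>j. (x j)\<^sup>2)" and sy: "summable (\<lambda>j. (y j)\<^sup>2)"
  shows "summable (\<lambda>j. (x j + y j)\<^sup>2)"
    "sqrt (\<Sum>j. (x j + y j)\<^sup>2) \<le> sqrt (\<Sum>j. (x j)\<^sup>2) + sqrt (\<Sum>j. (y j)\<^sup>2)"
proof -
  have le: "(x j + y j)\<^sup>2 \<le> 2 * (x j)\<^sup>2 + 2 * (y j)\<^sup>2" for j
    by (smt (verit) zero_le_power2 power2_diff power2_sum)
  show sxy: "summable (\<lambda>j. (x j + y j)\<^sup>2)"
    by (rule summable_comparison_test[of _ "\<lambda>j. 2 * (x j)\<^sup>2 + 2 * (y j)\<^sup>2"])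
       (use le sx sy in \<open>auto intro!: summable_add summable_mult\<close>)
  let ?A = "sqrt (\<Sum>j. (x j)\<^sup>2)" and ?B = "sqrt (\<Sum>j. (y j)\<^sup>2)"
  have "(\<Sum>j. (x j + y j)\<^sup>2) \<le> (?A + ?B)\<^sup>2"
  proof (rule suminf_le_const[OF sxy])
    fix n
    have "L2_set (\<lambda>j. x j + y j) {..<n} \<le> L2_set x {..<n} + L2_set y {..<n}"
      by (rule L2_set_triangle_ineq)
    also have "L2_set x {..<n} \<le> ?A" unfolding L2_set_def
      by (intro real_sqrt_le_mono sum_le_suminf sx) auto
    also have "L2_set y {..<n} \<le> ?B" unfolding L2_set_def
      by (intro real_sqrt_le_mono sum_le_suminf sy) auto
    finally have "sqrt (\<Sum>j<n. (x j + y j)\<^sup>2) \<le> ?A + ?B" unfolding L2_set_def by (simp add: add_mono)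
    then have "(sqrt (\<Sum>j<n. (x j + y j)\<^sup>2))\<^sup>2 \<le> (?A + ?B)\<^sup>2"
      by (intro power_mono) (simp_all add: sum_nonneg)
    moreover have "0 \<le> (\<Sum>j<n. (x j + y j)\<^sup>2)" by (simp add: sum_nonneg)
    ultimately show "(\<Sum>j<n. (x j + y j)\<^sup>2) \<le> (?A + ?B)\<^sup>2"
      by simp
  qed
  then have "sqrt (\<Sum>j. (x j + y j)\<^sup>2) \<le> sqrt ((?A + ?B)\<^sup>2)" by (rule real_sqrt_le_mono)
  also have "\<dots> = ?A + ?B" by (simp add: suminf_nonneg sx sy)
  finally show "sqrt (\<Sum>j. (x j + y j)\<^sup>2) \<le> ?A + ?B" .
qed

lemma inX_add: "in_Xalpha lam p a u \<Longrightarrow> in_Xalpha lam p a v \<Longrightarrow> in_Xalpha lam p a (u + v)"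
  unfolding in_Xalpha_def using seq_l2_tri(1)[of "\<lambda>j. lam j powr a * (u \<bullet> p j)" "\<lambda>j. lam j powr a * (v \<bullet> p j)"]
  by (simp add: inner_add_left distrib_left)

lemma inX_minus: "in_Xalpha lam p a (- u) = in_Xalpha lam p a u"
  unfolding in_Xalpha_def by (simp add: power2_eq_square)

lemma N_minus: "alpha_norm lam p a (- u) = alpha_norm lam p a u"
  unfolding alpha_norm_def by (simp add: power2_eq_square)

lemma inX_diff: "in_Xalpha lam p a u \<Longrightarrow> in_Xalpha lam p a v \<Longrightarrow> in_Xalpha lam p a (u - v)"
  using inX_add[of lam p a u "- v"] inX_minus[of lam p a v] by simp

lemma inX_zero: "in_Xalpha lam p a 0"
  unfolding in_Xalpha_def by simp

lemma N_zero: "alpha_norm lam p a 0 = 0"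
  unfolding alpha_norm_def by simp

lemma N_nonneg: "in_Xalpha lam p a u \<Longrightarrow> 0 \<le> alpha_norm lam p a u"
  unfolding alpha_norm_def in_Xalpha_def by (simp add: suminf_nonneg)

lemma N_sq: "in_Xalpha lam p a u \<Longrightarrow> (alpha_norm lam p a u)\<^sup>2 = (\<Sum>j. (lam j powr a * (u \<bullet> p j))\<^sup>2)"
  unfolding alpha_norm_def in_Xalpha_def by (simp add: suminf_nonneg)

lemma N_tri: "in_Xalpha lam p a u \<Longrightarrow> in_Xalpha lam p a v \<Longrightarrow>
   alpha_norm lam p a (u + v) \<le> alpha_norm lam p a u + alpha_norm lam p a v"
  unfolding in_Xalpha_def alpha_norm_def
  using seq_l2_tri(2)[of "\<lambda>j. lam j powr a * (u \<bullet> p j)" "\<lambda>j. lam j powr a * (v \<bullet> p j)"]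
  by (simp add: inner_add_left distrib_left)

lemma N_diff_tri: "in_Xalpha lam p a u \<Longrightarrow> in_Xalpha lam p a v \<Longrightarrow> in_Xalpha lam p a w \<Longrightarrow>
   alpha_norm lam p a (u - w) \<le> alpha_norm lam p a (u - v) + alpha_norm lam p a (v - w)"
  using N_tri[of lam p a "u - v" "v - w"] inX_diff by fastforce

lemma N_diff_le: "in_Xalpha lam p a u \<Longrightarrow> in_Xalpha lam p a v \<Longrightarrow>
   alpha_norm lam p a (u - v) \<le> alpha_norm lam p a u + alpha_norm lam p a v"
  using N_tri[of lam p a u "- v"] inX_minus[of lam p a v] N_minus[of lam p a v] by simp

lemma Q_coord: "onrm p \<Longrightarrow> proj_first p n u \<bullet> p j = (if j < n then u \<bullet> p j else 0)"
  unfolding proj_first_def by (subst fin_coord) auto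

lemma inX_finsupp:
  assumes "finite F" "\<And>j. j \<notin> F \<Longrightarrow> u \<bullet> p j = 0"
  shows "in_Xalpha lam p a u" "(alpha_norm lam p a u)\<^sup>2 = (\<Sum>j\<in>F. (lam j powr a * (u \<bullet> p j))\<^sup>2)"
proof -
  have s: "(\<lambda>j. (lam j powr a * (u \<bullet> p j))\<^sup>2) sums (\<Sum>j\<in>F. (lam j powr a * (u \<bullet> p j))\<^sup>2)"
    by (rule sums_finite[OF assms(1)]) (simp add: assms(2))
  then show i: "in_Xalpha lam p a u" unfolding in_Xalpha_def by (rule sums_summable)
  show "(alpha_norm lam p a u)\<^sup>2 = (\<Sum>j\<in>F. (lam j powr a * (u \<bullet> p j))\<^sup>2)"
    using N_sq[OF i] sums_unique[OF s] by simp
qed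

lemma inX_Q: "onrm p \<Longrightarrow> in_Xalpha lam p a (proj_first p n u)"
  by (rule inX_finsupp(1)[of "{..<n}"]) (auto simp: Q_coord)

lemma N_Q_le:
  assumes "onrm p" "in_Xalpha lam p a u"
  shows "alpha_norm lam p a (proj_first p n u) \<le> alpha_norm lam p a u"
proof -
  have "(alpha_norm lam p a (proj_first p n u))\<^sup>2 = (\<Sum>j\<in>{..<n}. (lam j powr a * (proj_first p n u \<bullet> p j))\<^sup>2)"
    by (rule inX_finsupp(2)) (auto simp: Q_coord assms(1))
  also have "\<dots> = (\<Sum>j<n. (lam j powr a * (u \<bullet> p j))\<^sup>2)" by (simp add: Q_coord assms(1))
  also have "\<dots> \<le> (\<Sum>j. (lam j powr a * (u \<bullet> p j))\<^sup>2)"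
    using assms(2) unfolding in_Xalpha_def by (intro sum_le_suminf) auto
  also have "\<dots> = (alpha_norm lam p a u)\<^sup>2" using N_sq[OF assms(2)] by simp
  finally show ?thesis using N_nonneg[OF assms(2)] by (simp add: power2_le_iff_abs_le)
qed

lemma sgrp_coord:
  fixes p :: "nat \<Rightarrow> 'b::{real_inner,complete_space}"
  assumes "onrm p" "0 \<le> t" "\<And>j. 0 \<le> lam j"
  shows "op_sgrp lam p t x \<bullet> p k = exp (- lam k * t) * (x \<bullet> p k)"
  unfolding op_sgrp_def
proof (rule coef_series(2)[OF assms(1)])
  fix j
  have "exp (- lam j * t) \<le> 1" using assms by (simp add: mult_nonneg_nonneg)
  then show "\<bar>exp (- lam j * t) * (x \<bullet> p j)\<bar> \<le> \<bar>x \<bullet> p j\<bar>"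
    by (simp add: abs_mult mult_left_le_one_le)
qed

lemma inv_finsupp:
  assumes "finite F" "\<And>j. j \<notin> F \<Longrightarrow> x \<bullet> p j = 0"
  shows "op_inv lam p x = (\<Sum>j\<in>F. (x \<bullet> p j / lam j) *\<^sub>R p j)"
  unfolding op_inv_def by (rule suminf_finite) (use assms in auto)

lemma LA_dep:
  fixes v :: "nat \<Rightarrow> 'a::euclidean_space"
  assumes "DIM('a) \<le> n"
  shows "\<exists>c. (\<exists>j\<le>n. c j \<noteq> 0) \<and> (\<Sum>j\<le>n. c j *\<^sub>R v j) = 0"
proof (rule ccontr)
  assume H: "\<not> ?thesis"
  have H': "(\<Sum>j\<le>n. c j *\<^sub>R v j) \<noteq> 0" if "\<exists>j\<le>n. c j \<noteq> 0" for c
    using H that by meson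
  have inj: "inj_on v {..n}"
  proof (rule inj_onI, rule ccontr)
    fix i j assume ij: "i \<in> {..n}" "j \<in> {..n}" "v i = v j" "i \<noteq> j"
    let ?c = "\<lambda>k. if k = i then 1 else if k = j then -1 else (0::real)"
    have "(\<Sum>k\<le>n. ?c k *\<^sub>R v k) = (\<Sum>k\<le>n. (if k = i then v i else 0) + (if k = j then - v j else 0))"
      by (intro sum.cong) (use ij in auto)
    also have "\<dots> = v i - v j" using ij by (simp add: sum.distrib)
    finally have "(\<Sum>k\<le>n. ?c k *\<^sub>R v k) = 0" using ij by simp
    moreover have "\<exists>j'\<le>n. ?c j' \<noteq> 0" using ij by (intro exI[of _ i]) auto
    ultimately show False using H'[of ?c] by simp
  qed
  have ind: "independent (v ` {..n})"
  proof
    assume "dependent (v ` {..n})"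
    then obtain u where u: "\<exists>w\<in>v ` {..n}. u w \<noteq> 0" "(\<Sum>w\<in>v ` {..n}. u w *\<^sub>R w) = 0"
      using dependent_finite[of "v ` {..n}"] by auto
    have "(\<Sum>j\<le>n. u (v j) *\<^sub>R v j) = 0" using u(2) by (simp add: sum.reindex[OF inj])
    moreover from u(1) obtain j where "j \<le> n" "u (v j) \<noteq> 0" by auto
    ultimately show False using H'[of "\<lambda>j. u (v j)"] by blast
  qed
  have "card (v ` {..n}) = Suc n" using card_image[OF inj] by simp
  then show False using independent_bound[OF ind] assms by simp
qed

lemma lam_pos: "strict_mono lam \<Longrightarrow> 0 < (lam::nat\<Rightarrow>real) 0 \<Longrightarrow> 0 < lam j"
  by (metis le0 less_le_trans strict_mono_less_eq)

lemma spec_bound: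
  fixes p :: "nat \<Rightarrow> 'b::real_inner" and M :: "'b \<Rightarrow> 'a::euclidean_space"
  assumes op: "onrm p" and sm: "strict_mono lam" and l0: "0 < lam 0" and al: "alpha < 1"
   and lin: "linear M" and dim: "DIM('a) \<le> n"
   and est: "\<And>u. M u = 0 \<Longrightarrow> alpha_norm lam p alpha (op_inv lam p u) \<le> T * norm u"
  shows "lam n powr (alpha - 1) \<le> T"
proof -
  obtain c where c: "\<exists>j\<le>n. c j \<noteq> 0" "(\<Sum>j\<le>n. c j *\<^sub>R M (p j)) = 0"
    using LA_dep[OF dim, of "\<lambda>j. M (p j)"] by blast
  define w where "w = (\<Sum>j\<le>n. c j *\<^sub>R p j)"
  have Mw: "M w = 0" unfolding w_def using c(2) by (simp add: linear_sum[OF lin] linear_scale[OF lin])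
  have wc: "w \<bullet> p k = (if k \<le> n then c k else 0)" for k
    unfolding w_def by (subst fin_coord[OF op]) auto
  have nw: "(norm w)\<^sup>2 = (\<Sum>j\<le>n. (c j)\<^sup>2)" unfolding w_def by (rule fin_norm2[OF op]) simp
  have wpos: "0 < norm w"
  proof -
    from c(1) obtain j where "j \<le> n" "c j \<noteq> 0" by auto
    then have "w \<bullet> p j \<noteq> 0" using wc by simp
    then show ?thesis by (metis inner_zero_left zero_less_norm_iff)
  qed
  have lp: "0 < lam j" for j using lam_pos[OF sm l0] .
  define v where "v = op_inv lam p w"
  have v: "v = (\<Sum>j\<le>n. (w \<bullet> p j / lam j) *\<^sub>R p j)" unfolding v_def
    by (rule inv_finsupp) (auto simp: wc)
  have vc: "v \<bullet> p k = (if k \<le> n then c k / lam k else 0)" for k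
    unfolding v by (subst fin_coord[OF op]) (auto simp: wc)
  have Nv: "(alpha_norm lam p alpha v)\<^sup>2 = (\<Sum>j\<le>n. (lam j powr alpha * (v \<bullet> p j))\<^sup>2)"
    by (rule inX_finsupp(2)) (auto simp: vc)
  have inv: "in_Xalpha lam p alpha v" by (rule inX_finsupp(1)[of "{..n}"]) (auto simp: vc)
  have tm: "(lam n powr (alpha - 1))\<^sup>2 * (c j)\<^sup>2 \<le> (lam j powr alpha * (v \<bullet> p j))\<^sup>2" if "j \<le> n" for j
  proof -
    have "lam j powr alpha * (v \<bullet> p j) = lam j powr (alpha - 1) * c j"
      using that lp[of j] by (simp add: vc powr_diff)
    moreover have "lam n powr (alpha - 1) \<le> lam j powr (alpha - 1)"
      by (rule powr_mono2') (use al lp that sm in \<open>auto simp: strict_mono_less_eq\<close>)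
    ultimately show ?thesis
      by (simp add: power_mult_distrib mult_right_mono power_mono)
  qed
  have "(lam n powr (alpha - 1))\<^sup>2 * (norm w)\<^sup>2 \<le> (alpha_norm lam p alpha v)\<^sup>2"
    unfolding nw Nv sum_distrib_left by (intro sum_mono tm) auto
  then have "lam n powr (alpha - 1) * norm w \<le> alpha_norm lam p alpha v"
    using N_nonneg[OF inv] by (metis power_mult_distrib power2_le_imp_le)
  also have "\<dots> \<le> T * norm w" unfolding v_def by (rule est[OF Mw])
  finally show ?thesis using wpos by simp
qed

lemma exp_integral:
  fixes mu t C :: real
  assumes "0 < mu" "0 \<le> t"
  shows "((\<lambda>s. C * exp (- mu * (t - s))) has_integral (C / mu - C / mu * exp (- mu * t))) {0..t}"
proof -
  have d: "((\<lambda>s. C / mu * exp (- mu * (t - s))) has_vector_derivative C * exp (- mu * (t - s))) (at s within {0..t})"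
    if "s \<in> {0..t}" for s
  proof -
    have "((\<lambda>s. C / mu * exp (- mu * (t - s))) has_real_derivative
        C * exp (- mu * (t - s))) (at s within {0..t})"
      using assms(1) by (auto intro!: derivative_eq_intros simp: field_simps)
    then show ?thesis
      by (simp add: has_real_derivative_iff_has_vector_derivative[symmetric])
  qed
  show ?thesis
    using fundamental_theorem_of_calculus[of 0 t "\<lambda>s. C / mu * exp (- mu * (t - s))" "\<lambda>s. C * exp (- mu * (t - s))", OF assms(2) d]
    by simp
qed

lemma group_bound:
  fixes p :: "nat \<Rightarrow> 'b::{real_inner,complete_space}"
  assumes op: "onrm p" and lp: "\<And>j. 0 \<le> lam j" and t: "0 \<le> t"
   and int: "((\<lambda>s. op_sgrp lam p (t - s) (F s)) has_integral (a - op_sgrp lam p t b)) {0..t}"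
   and Fb: "\<And>s. s \<in> {0..t} \<Longrightarrow> norm (F s) \<le> K"
   and G: "finite G" and mu: "0 < mu" "\<And>j. j \<in> G \<Longrightarrow> mu \<le> lam j"
  shows "(\<Sum>j\<in>G. (a \<bullet> p j - exp (- lam j * t) * (b \<bullet> p j))\<^sup>2) \<le> (K / mu)\<^sup>2"
proof -
  define c where "c j = a \<bullet> p j - exp (- lam j * t) * (b \<bullet> p j)" for j
  define Y where "Y = (\<Sum>j\<in>G. c j *\<^sub>R p j)"
  have K0: "0 \<le> K" using Fb[of 0] t by (meson atLeastAtMost_iff norm_ge_zero order_trans order_refl)
  have nY: "(norm Y)\<^sup>2 = (\<Sum>j\<in>G. (c j)\<^sup>2)" unfolding Y_def by (rule fin_norm2[OF op G])
  have h: "((\<lambda>s. op_sgrp lam p (t - s) (F s) \<bullet> Y) has_integral ((a - op_sgrp lam p t b) \<bullet> Y)) {0..t}"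
    using has_integral_linear[OF int bounded_linear_inner_left[of Y]] by (simp add: o_def)
  have lhs: "(a - op_sgrp lam p t b) \<bullet> Y = (norm Y)\<^sup>2"
  proof -
    have "(a - op_sgrp lam p t b) \<bullet> Y = (\<Sum>j\<in>G. c j * ((a - op_sgrp lam p t b) \<bullet> p j))"
      unfolding Y_def by (simp add: inner_sum_right)
    also have "\<dots> = (\<Sum>j\<in>G. (c j)\<^sup>2)"
      by (intro sum.cong refl) (simp add: inner_diff_left sgrp_coord[OF op t lp] c_def power2_eq_square)
    finally show ?thesis using nY by simp
  qed
  have pt: "op_sgrp lam p (t - s) (F s) \<bullet> Y \<le> norm Y * K * exp (- mu * (t - s))" if s: "s \<in> {0..t}" for s
  proof -
    define Z where "Z = (\<Sum>j\<in>G. (exp (- lam j * (t - s)) * (F s \<bullet> p j)) *\<^sub>R p j)"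
    have ts: "0 \<le> t - s" using s by auto
    have "op_sgrp lam p (t - s) (F s) \<bullet> Y = (\<Sum>j\<in>G. c j * (exp (- lam j * (t - s)) * (F s \<bullet> p j)))"
      unfolding Y_def by (simp add: inner_sum_right sgrp_coord[OF op ts lp])
    also have "\<dots> = Z \<bullet> Y"
    proof -
      have pY: "p k \<bullet> Y = c k" if "k \<in> G" for k
        using fin_coord[OF op G, of c k] that by (simp add: Y_def inner_commute)
      show ?thesis unfolding Z_def inner_sum_left by (intro sum.cong refl) (simp add: pY)
    qed
    also have "\<dots> \<le> norm Z * norm Y" by (metis Cauchy_Schwarz_ineq2 abs_le_iff)
    also have "norm Z \<le> K * exp (- mu * (t - s))"
    proof -
      have "(norm Z)\<^sup>2 = (\<Sum>j\<in>G. (exp (- lam j * (t - s)) * (F s \<bullet> p j))\<^sup>2)"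
        unfolding Z_def by (rule fin_norm2[OF op G])
      also have "\<dots> \<le> (\<Sum>j\<in>G. (exp (- mu * (t - s)))\<^sup>2 * (F s \<bullet> p j)\<^sup>2)"
      proof (intro sum_mono)
        fix j assume j: "j \<in> G"
        have "exp (- lam j * (t - s)) \<le> exp (- mu * (t - s))"
          using mu(2)[OF j] ts by (simp add: mult_right_mono)
        then show "(exp (- lam j * (t - s)) * (F s \<bullet> p j))\<^sup>2 \<le> (exp (- mu * (t - s)))\<^sup>2 * (F s \<bullet> p j)\<^sup>2"
          by (simp add: power_mult_distrib mult_right_mono power_mono)
      qed
      also have "\<dots> = (exp (- mu * (t - s)))\<^sup>2 * (\<Sum>j\<in>G. (F s \<bullet> p j)\<^sup>2)" by (simp add: sum_distrib_left)
      also have "\<dots> \<le> (exp (- mu * (t - s)))\<^sup>2 * (norm (F s))\<^sup>2"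
        by (intro mult_left_mono bessel_fin[OF op G]) simp
      also have "\<dots> \<le> (exp (- mu * (t - s)))\<^sup>2 * K\<^sup>2"
        by (intro mult_left_mono power_mono Fb s) auto
      also have "\<dots> = (K * exp (- mu * (t - s)))\<^sup>2" by (simp add: power_mult_distrib)
      finally show ?thesis using K0 by (simp add: power2_le_iff_abs_le)
    qed
    then have "norm Z * norm Y \<le> K * exp (- mu * (t - s)) * norm Y" by (simp add: mult_right_mono)
    finally show ?thesis by (simp add: mult_ac)
  qed
  have "(norm Y)\<^sup>2 \<le> norm Y * K / mu - norm Y * K / mu * exp (- mu * t)"
    using has_integral_le[OF h exp_integral[OF mu(1) t, of "norm Y * K"] pt] lhs
    by simp
  also have "\<dots> \<le> norm Y * (K / mu)" using K0 mu(1) by (simp add: mult_nonneg_nonneg)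
  finally have "norm Y \<le> K / mu"
    by (metis K0 mu(1) divide_nonneg_pos mult_le_cancel_left_pos norm_ge_zero power2_eq_square
        order_le_less mult_zero_left)
  then have "(norm Y)\<^sup>2 \<le> (K / mu)\<^sup>2" by (simp add: power_mono)
  then show ?thesis using nY c_def by simp
qed

lemma pow_identity:
  fixes L K a :: real and k :: nat
  assumes "0 < L"
  shows "((2^(k+1)*L) powr a)\<^sup>2 * (K / (2^k*L))\<^sup>2 = 2 powr (2*a) * K\<^sup>2 * (L powr (a-1))\<^sup>2 * (2 powr (2*a-2))^k"
proof -
  have e1: "(2::real)^k = exp (k * ln 2)" by (simp add: exp_of_nat_mult)
  have e2: "(2::real)^(k+1) = exp ((k+1) * ln 2)" by (metis exp_of_nat_mult exp_ln of_nat_Suc Suc_eq_plus1 zero_less_numeral)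
  have eL: "L = exp (ln L)" using assms by simp
  have key: "exp (2 * (a * (ln 2 + real k * ln 2 + ln L))) =
     exp (2 * a * ln 2) * (exp (2 * (ln L * (a - 1))) * (exp (real k * ((2 * a - 2) * ln 2)) *
       (exp (real k * ln 2) * (exp (ln L) * (exp (real k * ln 2) * exp (ln L))))))"
    unfolding exp_add[symmetric] by (simp add: algebra_simps)
  show ?thesis using assms
    apply (simp add: powr_def e1 e2 power2_eq_square divide_simps ln_mult flip: exp_add exp_of_nat_mult)
    using key eL by simp
qed

lemma q_lt1: "alpha < 1 \<Longrightarrow> 2 powr (2*alpha - 2) < (1::real)"
proof -
  assume "alpha < 1"
  then have "2 powr (2*alpha-2) < (2::real) powr 0" by (intro powr_less_mono) auto
  then show ?thesis by simp
qed

lemma dyad_props: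
  fixes L x :: real
  assumes "0 < L" "L \<le> x"
  shows "2 ^ nat \<lfloor>log 2 (x / L)\<rfloor> * L \<le> x" "x < 2 ^ (nat \<lfloor>log 2 (x / L)\<rfloor> + 1) * L"
proof -
  define r where "r = x / L"
  have r1: "1 \<le> r" using assms by (simp add: r_def)
  have lg: "0 \<le> log 2 r" using r1 by simp
  define k where "k = nat \<lfloor>log 2 r\<rfloor>"
  have kk: "real k = of_int \<lfloor>log 2 r\<rfloor>" using lg by (simp add: k_def)
  have "(2::real) ^ k = 2 powr (real k)" by (simp add: powr_realpow)
  also have "\<dots> \<le> 2 powr (log 2 r)" unfolding kk by (intro powr_mono) auto
  also have "\<dots> = r" using r1 by simp
  finally have a: "2 ^ k \<le> r" .
  have "r = 2 powr (log 2 r)" using r1 by simp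
  also have "\<dots> < 2 powr (real k + 1)" unfolding kk by (intro powr_less_mono) linarith+
  also have "\<dots> = 2 ^ (k + 1)" by (simp add: powr_add powr_realpow)
  finally have b: "r < 2 ^ (k + 1)" .
  show "2 ^ nat \<lfloor>log 2 (x / L)\<rfloor> * L \<le> x" using a assms unfolding k_def r_def by (simp add: field_simps)
  show "x < 2 ^ (nat \<lfloor>log 2 (x / L)\<rfloor> + 1) * L" using b assms unfolding k_def r_def by (simp add: field_simps)
qed

lemma dyadic_sum:
  fixes lam d :: "nat \<Rightarrow> real"
  assumes L: "0 < L" and al: "0 \<le> alpha" "alpha < 1" and K0: "0 \<le> K" and J: "finite J"
    and lJ: "\<And>j. j \<in> J \<Longrightarrow> L \<le> lam j"
    and gb: "\<And>G mu. G \<subseteq> J \<Longrightarrow> 0 < mu \<Longrightarrow> (\<And>j. j \<in> G \<Longrightarrow> mu \<le> lam j) \<Longrightarrow> (\<Sum>j\<in>G. (d j)\<^sup>2) \<le> (K / mu)\<^sup>2"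
  shows "(\<Sum>j\<in>J. (lam j powr alpha * d j)\<^sup>2) \<le>
     2 powr (2*alpha) / (1 - 2 powr (2*alpha-2)) * K\<^sup>2 * (L powr (alpha-1))\<^sup>2"
proof -
  define m where "m j = nat \<lfloor>log 2 (lam j / L)\<rfloor>" for j
  define q :: real where "q = 2 powr (2*alpha-2)"
  define A where "A = 2 powr (2*alpha) * K\<^sup>2 * (L powr (alpha-1))\<^sup>2"
  have q0: "0 < q" by (simp add: q_def)
  have "q < 2 powr 0" unfolding q_def using al by (intro powr_less_mono) auto
  then have q1: "q < 1" by simp
  have A0: "0 \<le> A" by (simp add: A_def)
  have grp: "(\<Sum>j\<in>J. (lam j powr alpha * d j)\<^sup>2) = (\<Sum>k\<in>m ` J. \<Sum>j\<in>{j. j \<in> J \<and> m j = k}. (lam j powr alpha * d j)\<^sup>2)"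
    by (rule sum.group[symmetric]) (use J in auto)
  have each: "(\<Sum>j\<in>{j. j \<in> J \<and> m j = k}. (lam j powr alpha * d j)\<^sup>2) \<le> A * q ^ k" for k
  proof -
    let ?G = "{j. j \<in> J \<and> m j = k}"
    have lo: "2 ^ k * L \<le> lam j" and hi: "lam j < 2 ^ (k + 1) * L" if "j \<in> ?G" for j
      using dyad_props[OF L lJ, of j] that by (auto simp: m_def)
    have "(\<Sum>j\<in>?G. (lam j powr alpha * d j)\<^sup>2) \<le> (\<Sum>j\<in>?G. ((2^(k+1)*L) powr alpha)\<^sup>2 * (d j)\<^sup>2)"
    proof (intro sum_mono)
      fix j assume j: "j \<in> ?G"
      have "0 < lam j" using lo[OF j] L by (smt (verit) mult_pos_pos zero_less_power)
      then have "lam j powr alpha \<le> (2^(k+1)*L) powr alpha" using hi[OF j] al by (intro powr_mono2) auto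
      then show "(lam j powr alpha * d j)\<^sup>2 \<le> ((2^(k+1)*L) powr alpha)\<^sup>2 * (d j)\<^sup>2"
        by (simp add: power_mult_distrib mult_right_mono power_mono)
    qed
    also have "\<dots> = ((2^(k+1)*L) powr alpha)\<^sup>2 * (\<Sum>j\<in>?G. (d j)\<^sup>2)" by (simp add: sum_distrib_left)
    also have "\<dots> \<le> ((2^(k+1)*L) powr alpha)\<^sup>2 * (K / (2^k * L))\<^sup>2"
      by (intro mult_left_mono gb) (use L lo in auto)
    also have "\<dots> = A * q ^ k" unfolding A_def q_def by (rule pow_identity[OF L])
    finally show ?thesis .
  qed
  have "(\<Sum>j\<in>J. (lam j powr alpha * d j)\<^sup>2) \<le> (\<Sum>k\<in>m ` J. A * q ^ k)"
    unfolding grp by (intro sum_mono each)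
  also have "\<dots> = A * (\<Sum>k\<in>m ` J. q ^ k)" by (simp add: sum_distrib_left)
  also have "(\<Sum>k\<in>m ` J. q ^ k) \<le> (\<Sum>k. q ^ k)"
    by (rule sum_le_suminf) (use J q0 q1 in \<open>auto intro: summable_geometric\<close>)
  also have "(\<Sum>k. q ^ k) = 1 / (1 - q)" using q0 q1 by (simp add: suminf_geometric)
  finally have "(\<Sum>j\<in>J. (lam j powr alpha * d j)\<^sup>2) \<le> A * (1 / (1 - q))" using A0 by (simp add: mult_left_mono)
  then show ?thesis unfolding A_def q_def by (simp add: field_simps)
qed

lemma core:
  fixes p :: "nat \<Rightarrow> 'b::{real_inner,complete_space}"
  assumes op: "onrm p" and sm: "strict_mono lam" and l0: "0 < lam 0"
    and al: "0 \<le> alpha" "alpha < 1"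
    and Kf: "\<And>v. in_Xalpha lam p alpha v \<Longrightarrow> norm (f v) \<le> K"
    and bk: "\<And>t. 0 \<le> t \<Longrightarrow> \<exists>b. in_Xalpha lam p alpha b \<and> alpha_norm lam p alpha b \<le> Ka \<and>
        (\<exists>u. mild_sol lam p alpha f b u \<and> u t = a)"
    and aX: "in_Xalpha lam p alpha a"
  shows "alpha_norm lam p alpha (a - proj_first p n a) \<le>
     (1 + sqrt (2 powr (2*alpha) / (1 - 2 powr (2*alpha-2))) * K) * lam n powr (alpha-1)"
proof -
  define C1 where "C1 = 2 powr (2*alpha) / (1 - 2 powr (2*alpha-2))"
  have C10: "0 \<le> C1" unfolding C1_def using q_lt1[OF al(2)] by (auto intro!: divide_nonneg_pos)
  have lp: "0 < lam j" for j using lam_pos[OF sm l0] .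
  have lp': "0 \<le> lam j" for j using lp[of j] by simp
  have K0: "0 \<le> K" using Kf[OF inX_zero] norm_ge_zero order_trans by blast
  define L where "L = lam n"
  define Ep where "Ep = L powr (alpha - 1)"
  have L0: "0 < L" using lp by (simp add: L_def)
  have Ep0: "0 < Ep" using L0 by (simp add: Ep_def)
  obtain b0 where "in_Xalpha lam p alpha b0" "alpha_norm lam p alpha b0 \<le> Ka" using bk[of 0] by auto
  then have Ka0: "0 \<le> Ka" using N_nonneg by (metis order_trans)
  define Kb where "Kb = Ka + 1"
  have Kb0: "0 < Kb" using Ka0 by (simp add: Kb_def)
  define t where "t = max 0 (ln (Kb / Ep) / L)"
  have t0: "0 \<le> t" by (simp add: t_def)
  have texp: "exp (- L * t) * Kb \<le> Ep"
  proof -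
    have "ln (Kb / Ep) / L \<le> t" by (simp add: t_def)
    then have "ln (Kb / Ep) \<le> t * L" using L0 by (simp add: pos_divide_le_eq)
    then have "ln (Kb / Ep) \<le> L * t" by (simp add: mult.commute)
    then have "exp (- L * t) \<le> exp (- ln (Kb / Ep))" by simp
    also have "\<dots> = Ep / Kb" using Kb0 Ep0 by (simp add: exp_diff ln_div)
    finally show ?thesis using Kb0 by (simp add: field_simps)
  qed
  obtain b u where bX: "in_Xalpha lam p alpha b" and bK: "alpha_norm lam p alpha b \<le> Ka"
    and ms: "mild_sol lam p alpha f b u" and ut: "u t = a" using bk[OF t0] by blast
  have u0: "u 0 = b" and uX: "\<And>s. 0 \<le> s \<Longrightarrow> in_Xalpha lam p alpha (u s)"
    and int: "((\<lambda>s. op_sgrp lam p (t - s) (f (u s))) has_integral (a - op_sgrp lam p t b)) {0..t}"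
    using ms t0 ut unfolding mild_sol_def by auto
  define d where "d j = a \<bullet> p j - exp (- lam j * t) * (b \<bullet> p j)" for j
  have gb: "(\<Sum>j\<in>G. (d j)\<^sup>2) \<le> (K / mu)\<^sup>2" if "finite G" "0 < mu" "\<And>j. j \<in> G \<Longrightarrow> mu \<le> lam j" for G mu
    unfolding d_def
    by (rule group_bound[OF op lp' t0 int _ that]) (auto intro: Kf uX)
  define B where "B = (1 + sqrt C1 * K) * Ep"
  have B0: "0 \<le> B" using C10 K0 Ep0 by (simp add: B_def)
  have part: "(\<Sum>j<M. (lam j powr alpha * ((a - proj_first p n a) \<bullet> p j))\<^sup>2) \<le> B\<^sup>2" for M
  proof -
    define J where "J = {n..<M}"
    have fJ: "finite J" by (simp add: J_def)
    define h1 where "h1 j = lam j powr alpha * d j" for j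
    define h2 where "h2 j = lam j powr alpha * (exp (- lam j * t) * (b \<bullet> p j))" for j
    have e1: "(\<Sum>j<M. (lam j powr alpha * ((a - proj_first p n a) \<bullet> p j))\<^sup>2) = (\<Sum>j\<in>J. (lam j powr alpha * (a \<bullet> p j))\<^sup>2)"
      unfolding J_def by (rule sum.mono_neutral_cong_right) (auto simp: inner_diff_left Q_coord[OF op])
    have e2: "(\<Sum>j\<in>J. (lam j powr alpha * (a \<bullet> p j))\<^sup>2) = (L2_set (\<lambda>j. h1 j + h2 j) J)\<^sup>2"
      unfolding L2_set_def h1_def h2_def by (simp add: sum_nonneg d_def algebra_simps)
    have l1: "L2_set (\<lambda>j. h1 j + h2 j) J \<le> L2_set h1 J + L2_set h2 J"
      by (rule L2_set_triangle_ineq)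
    have l2: "L2_set h1 J \<le> sqrt C1 * K * Ep"
    proof -
      have "(\<Sum>j\<in>J. (lam j powr alpha * d j)\<^sup>2) \<le> C1 * K\<^sup>2 * Ep\<^sup>2"
        unfolding C1_def Ep_def
        by (rule dyadic_sum[OF L0 al K0 fJ]) (auto simp: J_def L_def sm strict_mono_less_eq intro!: gb intro: finite_subset)
      then have "sqrt (\<Sum>j\<in>J. (lam j powr alpha * d j)\<^sup>2) \<le> sqrt (C1 * K\<^sup>2 * Ep\<^sup>2)" by (rule real_sqrt_le_mono)
      also have "\<dots> = sqrt C1 * K * Ep" using K0 Ep0 by (simp add: real_sqrt_mult)
      finally show ?thesis unfolding L2_set_def h1_def .
    qed
    have l3: "L2_set h2 J \<le> Ep"
    proof -
      have "(\<Sum>j\<in>J. (h2 j)\<^sup>2)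
          \<le> (\<Sum>j\<in>J. (exp (- L * t))\<^sup>2 * (lam j powr alpha * (b \<bullet> p j))\<^sup>2)"
      proof (intro sum_mono)
        fix j assume "j \<in> J"
        then have "L \<le> lam j" by (auto simp: J_def L_def sm strict_mono_less_eq)
        then have "exp (- lam j * t) \<le> exp (- L * t)" using t0 by (simp add: mult_right_mono)
        then have sq: "(exp (- lam j * t))\<^sup>2 \<le> (exp (- L * t))\<^sup>2" by (simp add: power_mono)
        have eq: "(h2 j)\<^sup>2 = (exp (- lam j * t))\<^sup>2 * (lam j powr alpha * (b \<bullet> p j))\<^sup>2"
          by (simp add: h2_def power_mult_distrib)
        have "(exp (- lam j * t))\<^sup>2 * (lam j powr alpha * (b \<bullet> p j))\<^sup>2 \<le> (exp (- L * t))\<^sup>2 * (lam j powr alpha * (b \<bullet> p j))\<^sup>2"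
          by (rule mult_right_mono[OF sq]) simp
        then show "(h2 j)\<^sup>2 \<le> (exp (- L * t))\<^sup>2 * (lam j powr alpha * (b \<bullet> p j))\<^sup>2"
          by (simp only: eq)
      qed
      also have "\<dots> = (exp (- L * t))\<^sup>2 * (\<Sum>j\<in>J. (lam j powr alpha * (b \<bullet> p j))\<^sup>2)" by (simp add: sum_distrib_left)
      also have "(\<Sum>j\<in>J. (lam j powr alpha * (b \<bullet> p j))\<^sup>2) \<le> (\<Sum>j. (lam j powr alpha * (b \<bullet> p j))\<^sup>2)"
        using bX unfolding in_Xalpha_def by (intro sum_le_suminf fJ) auto
      also have "\<dots> = (alpha_norm lam p alpha b)\<^sup>2" using N_sq[OF bX] by simp
      also have "\<dots> \<le> Kb\<^sup>2" using bK N_nonneg[OF bX] by (simp add: Kb_def power_mono)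
      finally have "(\<Sum>j\<in>J. (h2 j)\<^sup>2) \<le> (exp (- L * t) * Kb)\<^sup>2"
        by (simp add: power_mult_distrib mult_left_mono)
      also have "\<dots> \<le> Ep\<^sup>2" using texp Kb0 by (intro power_mono) auto
      finally have "sqrt (\<Sum>j\<in>J. (h2 j)\<^sup>2) \<le> sqrt (Ep\<^sup>2)" by (rule real_sqrt_le_mono)
      then show ?thesis unfolding L2_set_def using Ep0 by simp
    qed
    have "L2_set (\<lambda>j. h1 j + h2 j) J \<le> B"
      using l1 l2 l3 by (simp add: B_def algebra_simps)
    moreover have "0 \<le> L2_set (\<lambda>j. h1 j + h2 j) J" by (rule L2_set_nonneg)
    ultimately have "(L2_set (\<lambda>j. h1 j + h2 j) J)\<^sup>2 \<le> B\<^sup>2" by (simp add: power_mono)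
    then show ?thesis using e1 e2 by simp
  qed
  have dX: "in_Xalpha lam p alpha (a - proj_first p n a)" by (rule inX_diff[OF aX inX_Q[OF op]])
  have "(alpha_norm lam p alpha (a - proj_first p n a))\<^sup>2 \<le> B\<^sup>2"
    unfolding N_sq[OF dX] using dX unfolding in_Xalpha_def by (intro suminf_le_const part)
  then have "alpha_norm lam p alpha (a - proj_first p n a) \<le> B"
    using B0 N_nonneg[OF dX] by (simp add: power2_le_iff_abs_le)
  then show ?thesis unfolding B_def C1_def Ep_def L_def .
qed

lemma seqcomp_bounded:
  fixes A :: "'a::real_normed_vector set"
  assumes sc: "\<forall>x :: nat \<Rightarrow> 'a. (\<forall>k. x k \<in> A) \<longrightarrow>
        (\<exists>r a. strict_mono r \<and> a \<in> A \<and> (\<lambda>k. norm (x (r k) - a)) \<longlonglongrightarrow> 0)"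
  shows "\<exists>R. \<forall>w\<in>A. norm w \<le> R"
proof (rule ccontr)
  assume "\<not> ?thesis"
  then have "\<forall>k::nat. \<exists>w. w \<in> A \<and> real k < norm w" by (meson not_le)
  then obtain x where x: "\<And>k. x k \<in> A" "\<And>k. real k < norm (x k)" by metis
  obtain r a where r: "strict_mono r" and lim: "(\<lambda>k. norm (x (r k) - a)) \<longlonglongrightarrow> 0"
    using sc x(1) by blast
  have "eventually (\<lambda>k. norm (x (r k) - a) < 1) sequentially"
    using order_tendstoD(2)[OF lim] by simp
  then obtain N where N: "\<And>k. k \<ge> N \<Longrightarrow> norm (x (r k) - a) < 1" by (auto simp: eventually_sequentially)
  define k where "k = max N (nat \<lceil>norm a\<rceil> + 1)"
  have f1: "norm (x (r k)) \<le> norm a + norm (x (r k) - a)" by (metis add.commute norm_triangle_sub)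
  have f2: "norm (x (r k) - a) < 1" using N[of k] by (simp add: k_def)
  have f3: "norm a + 1 \<le> real k" unfolding k_def by linarith
  have f4: "real k \<le> real (r k)" using seq_suble[OF r, of k] by simp
  have f5: "real (r k) < norm (x (r k))" by (rule x(2))
  show False using f1 f2 f3 f4 f5 by linarith
qed

lemmas attr_wp = global_attractor_def[THEN iffD1, THEN conjunct1]
lemmas attr_subset = global_attractor_def[THEN iffD1, THEN conjunct2, THEN conjunct1]
lemmas attr_seqcomp = global_attractor_def[THEN iffD1, THEN conjunct2, THEN conjunct2, THEN conjunct1]
lemmas attr_backw = global_attractor_def[THEN iffD1, THEN conjunct2, THEN conjunct2, THEN conjunct2, THEN conjunct2, THEN conjunct1]
lemmas attr_attract = global_attractor_def[THEN iffD1, THEN conjunct2, THEN conjunct2, THEN conjunct2, THEN conjunct2, THEN conjunct2]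

lemma attr_nonempty:
  assumes g: "global_attractor N S sol A" and s0: "S 0"
  shows "A \<noteq> {}"
proof -
  from attr_wp[OF g] s0 obtain u where u: "sol 0 u" by blast
  have h: "{0} \<subseteq> Collect S \<and> (\<exists>K. \<forall>b\<in>{0}. N b \<le> K)" using s0 by auto
  have "\<exists>T. \<forall>b\<in>{0}. \<forall>u. sol b u \<longrightarrow> (\<forall>t\<ge>T. \<exists>a\<in>A. N (u t - a) < 1)"
    using attr_attract[OF g, rule_format, OF h, of 1] by simp
  then obtain T where "\<forall>b\<in>{0}. \<forall>u. sol b u \<longrightarrow> (\<forall>t\<ge>T. \<exists>a\<in>A. N (u t - a) < 1)" ..
  then have "\<exists>a\<in>A. N (u T - a) < 1" using u by simp
  then show ?thesis by blast
qed

lemma attr_sub: "global_attractor N S sol A \<Longrightarrow> a \<in> A \<Longrightarrow> S a"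
  using attr_subset by blast

lemma attr_back: "global_attractor N S sol A \<Longrightarrow> a \<in> A \<Longrightarrow> 0 \<le> t \<Longrightarrow> \<exists>b\<in>A. \<exists>u. sol b u \<and> u t = a"
  using attr_backw by blast

lemma hausd_tri:
  fixes N :: "'b::real_vector \<Rightarrow> real" and Q :: "'b \<Rightarrow> 'b"
  assumes A: "A \<noteq> {}" and B: "B \<noteq> {}"
    and tri: "\<And>x y. x \<in> A \<Longrightarrow> y \<in> B \<Longrightarrow> N (x - y) \<le> d + N (Q x - y)"
    and nn1: "\<And>x y. x \<in> A \<Longrightarrow> y \<in> B \<Longrightarrow> 0 \<le> N (x - y)"
    and nn2: "\<And>x y. x \<in> A \<Longrightarrow> y \<in> B \<Longrightarrow> 0 \<le> N (Q x - y)"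
    and bA: "bdd_above ((\<lambda>x. INF y\<in>B. N (Q x - y)) ` A)"
    and bB: "bdd_above ((\<lambda>y. INF x\<in>A. N (Q x - y)) ` B)"
  shows "hausd N A B \<le> d + hausd N (Q ` A) B"
proof -
  have s1: "(SUP x\<in>A. INF y\<in>B. N (x - y)) \<le> d + (SUP x\<in>A. INF y\<in>B. N (Q x - y))"
  proof (rule cSUP_least[OF A])
    fix x assume x: "x \<in> A"
    have "(INF y\<in>B. N (x - y)) - d \<le> (INF y\<in>B. N (Q x - y))"
    proof (rule cINF_greatest[OF B])
      fix y assume y: "y \<in> B"
      have "(INF y\<in>B. N (x - y)) \<le> N (x - y)"
        by (rule cINF_lower[OF _ y]) (use nn1 x in \<open>auto intro!: bdd_belowI2\<close>)
      then show "(INF y\<in>B. N (x - y)) - d \<le> N (Q x - y)" using tri[OF x y] by simp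
    qed
    moreover have "(INF y\<in>B. N (Q x - y)) \<le> (SUP x\<in>A. INF y\<in>B. N (Q x - y))"
      by (rule cSUP_upper[OF x bA])
    ultimately show "(INF y\<in>B. N (x - y)) \<le> d + (SUP x\<in>A. INF y\<in>B. N (Q x - y))" by simp
  qed
  have s2: "(SUP y\<in>B. INF x\<in>A. N (x - y)) \<le> d + (SUP y\<in>B. INF x\<in>A. N (Q x - y))"
  proof (rule cSUP_least[OF B])
    fix y assume y: "y \<in> B"
    have "(INF x\<in>A. N (x - y)) - d \<le> (INF x\<in>A. N (Q x - y))"
    proof (rule cINF_greatest[OF A])
      fix x assume x: "x \<in> A"
      have "(INF x\<in>A. N (x - y)) \<le> N (x - y)"
        by (rule cINF_lower[OF _ x]) (use nn1 y in \<open>auto intro!: bdd_belowI2\<close>)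
      then show "(INF x\<in>A. N (x - y)) - d \<le> N (Q x - y)" using tri[OF x y] by simp
    qed
    moreover have "(INF x\<in>A. N (Q x - y)) \<le> (SUP y\<in>B. INF x\<in>A. N (Q x - y))"
      by (rule cSUP_upper[OF y bB])
    ultimately show "(INF x\<in>A. N (x - y)) \<le> d + (SUP y\<in>B. INF x\<in>A. N (Q x - y))" by simp
  qed
  show ?thesis unfolding hausd_def image_image using s1 s2 by (simp add: max_def)
qed

theorem theorem5p3:
  fixes alpha eps0 :: real and n :: nat
    and A0 :: "'a::euclidean_space \<Rightarrow> 'a" and lam0 :: "nat \<Rightarrow> real"
    and lam :: "real \<Rightarrow> nat \<Rightarrow> real" and phi :: "real \<Rightarrow> nat \<Rightarrow> 'b::{real_inner,complete_space}"
    and E :: "real \<Rightarrow> 'a \<Rightarrow> 'b" and M :: "real \<Rightarrow> 'b \<Rightarrow> 'a"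
    and tau rho :: "real \<Rightarrow> real"
    and f0 :: "'a \<Rightarrow> 'a" and f :: "real \<Rightarrow> 'b \<Rightarrow> 'b"
    and Att :: "real \<Rightarrow> 'b set" and Att0 :: "'a set"
  assumes alpha: "0 < alpha" "alpha < 1"
    and eps0: "0 < eps0"
    (* X_0 is n-dimensional; A_0 invertible with simple spectrum lam0 0 < ... < lam0 (n-1) *)
    and dimX0: "DIM('a) = n"
    and A0_lin: "linear A0" and A0_inv: "bij A0"
    and lam0_mono: "\<And>i j. i < j \<Longrightarrow> j < n \<Longrightarrow> lam0 i < lam0 j"
    and lam0_pos: "0 < lam0 0"
    and A0_spec: "{c. \<exists>v. v \<noteq> 0 \<and> A0 v = c *\<^sub>R v} = lam0 ` {..<n}"
    (* A_eps: positive self-adjoint, compact resolvent, simple eigenvalues, orthonormal eigenbasis *)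
    and lam_mono: "\<And>e. e \<in> {0<..eps0} \<Longrightarrow> strict_mono (lam e)"
    and lam_pos: "\<And>e. e \<in> {0<..eps0} \<Longrightarrow> 0 < lam e 0"
    and lam_infty: "\<And>e. e \<in> {0<..eps0} \<Longrightarrow> filterlim (lam e) at_top sequentially"
    and phi_onb: "\<And>e. e \<in> {0<..eps0} \<Longrightarrow> orthonormal_basis_seq (phi e)"
    (* E_eps, M_eps *)
    and E_lin: "\<And>e. e \<in> {0<..eps0} \<Longrightarrow> linear (E e)"
    and E_range: "\<And>e u. e \<in> {0<..eps0} \<Longrightarrow> in_Xalpha (lam e) (phi e) alpha (E e u)"
    and M_lin: "\<And>e. e \<in> {0<..eps0} \<Longrightarrow> linear (M e)"
    and ME: "\<And>e u. e \<in> {0<..eps0} \<Longrightarrow> M e (E e u) = u"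
    and E_norm_lim: "\<And>u. ((\<lambda>e. norm (E e u)) \<longlongrightarrow> norm u) (at_right 0)"
    and EM_bdd: "\<exists>K. \<forall>e\<in>{0<..eps0}. \<forall>u v.
        alpha_norm (lam e) (phi e) alpha (E e u) \<le> K * norm u \<and> norm (M e v) \<le> K * norm v"
    (* compact convergence of A_eps^{-1} to A_0^{-1} *)
    and res_conv: "\<And>es v w. (\<forall>k. es k \<in> {0<..eps0}) \<Longrightarrow> es \<longlonglongrightarrow> 0 \<Longrightarrow>
        (\<forall>k. in_Xalpha (lam (es k)) (phi (es k)) alpha (v k)) \<Longrightarrow>
        (\<lambda>k. alpha_norm (lam (es k)) (phi (es k)) alpha (v k - E (es k) w)) \<longlonglongrightarrow> 0 \<Longrightarrow>
        (\<lambda>k. alpha_norm (lam (es k)) (phi (es k)) alpha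
            (op_inv (lam (es k)) (phi (es k)) (v k) - E (es k) (inv A0 w))) \<longlonglongrightarrow> 0"
    and res_compact: "\<And>es v. (\<forall>k. es k \<in> {0<..eps0}) \<Longrightarrow> es \<longlonglongrightarrow> 0 \<Longrightarrow>
        (\<forall>k. norm (v k) = 1) \<Longrightarrow>
        \<exists>r w. strict_mono r \<and>
          (\<lambda>k. alpha_norm (lam (es (r k))) (phi (es (r k))) alpha
            (op_inv (lam (es (r k))) (phi (es (r k))) (v (r k)) - E (es (r k)) w)) \<longlonglongrightarrow> 0"
    (* rates tau, rho *)
    and tau_mono: "mono_on {0..eps0} tau" and tau0: "tau 0 = 0"
    and rho_mono: "mono_on {0..eps0} rho" and rho0: "rho 0 = 0"
    and tau_est: "\<And>e u. e \<in> {0<..eps0} \<Longrightarrow>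
        alpha_norm (lam e) (phi e) alpha (op_inv (lam e) (phi e) u - E e (inv A0 (M e u)))
          \<le> tau e * norm u"
    and rho_est: "\<exists>C. \<forall>e\<in>{0<..eps0}. \<forall>v w. in_Xalpha (lam e) (phi e) alpha v \<longrightarrow>
        norm (f e v - E e (f0 w)) \<le> C * alpha_norm (lam e) (phi e) alpha (v - E e w) + rho e"
    (* nonlinearities: C^1, uniformly bounded, uniformly Lipschitz *)
    and f0_C1: "\<exists>D :: 'a \<Rightarrow> 'a \<Rightarrow>\<^sub>L 'a. (\<forall>x. (f0 has_derivative blinfun_apply (D x)) (at x)) \<and> continuous_on UNIV D"
    and f_C1: "\<And>e. e \<in> {0<..eps0} \<Longrightarrow> C1_wrt (in_Xalpha (lam e) (phi e) alpha) (alpha_norm (lam e) (phi e) alpha) (f e)"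
    and f_bdd: "\<exists>K. (\<forall>x. norm (f0 x) \<le> K) \<and>
        (\<forall>e\<in>{0<..eps0}. \<forall>v. in_Xalpha (lam e) (phi e) alpha v \<longrightarrow> norm (f e v) \<le> K)"
    and f_lip: "\<exists>L. (\<forall>x y. norm (f0 x - f0 y) \<le> L * norm (x - y)) \<and>
        (\<forall>e\<in>{0<..eps0}. \<forall>v w. in_Xalpha (lam e) (phi e) alpha v \<longrightarrow> in_Xalpha (lam e) (phi e) alpha w \<longrightarrow>
           norm (f e v - f e w) \<le> L * alpha_norm (lam e) (phi e) alpha (v - w))"
    (* global attractors *)
    and Att_attr: "\<And>e. e \<in> {0<..eps0} \<Longrightarrow>
        global_attractor (alpha_norm (lam e) (phi e) alpha) (in_Xalpha (lam e) (phi e) alpha)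
          (mild_sol (lam e) (phi e) alpha (f e)) (Att e)"
    and Att_bdd: "\<exists>K. \<forall>e\<in>{0<..eps0}. \<forall>a\<in>Att e. alpha_norm (lam e) (phi e) alpha a \<le> K"
    and Att0_attr: "global_attractor norm (\<lambda>_. True) (ode_sol A0 f0) Att0"
  shows "\<exists>C>0. \<forall>e\<in>{0<..eps0}.
      hausd (alpha_norm (lam e) (phi e) alpha) (Att e) (E e ` Att0)
        \<le> C * (tau e + rho e)
          + hausd (alpha_norm (lam e) (phi e) alpha) (proj_first (phi e) n ` Att e) (E e ` Att0)"
proof -
  from f_bdd obtain K where K0f: "\<And>x. norm (f0 x) \<le> K"
    and Kf: "\<And>e v. e \<in> {0<..eps0} \<Longrightarrow> in_Xalpha (lam e) (phi e) alpha v \<Longrightarrow> norm (f e v) \<le> K" by blast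
  from Att_bdd obtain Ka where Ka: "\<And>e a. e \<in> {0<..eps0} \<Longrightarrow> a \<in> Att e \<Longrightarrow> alpha_norm (lam e) (phi e) alpha a \<le> Ka" by blast
  from EM_bdd obtain KE where KE: "\<And>e u. e \<in> {0<..eps0} \<Longrightarrow> alpha_norm (lam e) (phi e) alpha (E e u) \<le> KE * norm u" by blast
  obtain R where R: "\<And>w. w \<in> Att0 \<Longrightarrow> norm w \<le> R"
    using seqcomp_bounded[OF attr_seqcomp[OF Att0_attr]] by blast
  have Att0ne: "Att0 \<noteq> {}" by (rule attr_nonempty[OF Att0_attr]) simp
  have K0: "0 \<le> K" using K0f[of 0] norm_ge_zero order_trans by blast
  define C1 where "C1 = 2 powr (2*alpha) / (1 - 2 powr (2*alpha-2))"
  have C10: "0 \<le> C1" unfolding C1_def using q_lt1[OF alpha(2)] by (auto intro!: divide_nonneg_pos)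
  define Cst where "Cst = 1 + sqrt C1 * K"
  have Cst0: "0 < Cst" using C10 K0 by (simp add: Cst_def add_pos_nonneg)
  show ?thesis
  proof (intro exI[of _ Cst] conjI ballI)
    show "0 < Cst" by (rule Cst0)
    fix e assume e: "e \<in> {0<..eps0}"
    let ?N = "alpha_norm (lam e) (phi e) alpha"
    let ?X = "in_Xalpha (lam e) (phi e) alpha"
    let ?Q = "proj_first (phi e) n"
    have op: "onrm (phi e)" by (rule onb_onrm[OF phi_onb[OF e]])
    have sm: "strict_mono (lam e)" by (rule lam_mono[OF e])
    have l0: "0 < lam e 0" by (rule lam_pos[OF e])
    have inv0: "inv A0 0 = 0"
    proof -
      have "A0 0 = 0" by (rule linear_0[OF A0_lin])
      then show ?thesis using bij_is_inj[OF A0_inv] by (metis inv_f_f)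
    qed
    have E0: "E e 0 = 0" by (rule linear_0[OF E_lin[OF e]])
    have spec: "lam e n powr (alpha - 1) \<le> tau e"
    proof (rule spec_bound[OF op sm l0 alpha(2) M_lin[OF e]])
      show "DIM('a) \<le> n" using dimX0 by simp
      fix u assume "M e u = 0"
      then show "?N (op_inv (lam e) (phi e) u) \<le> tau e * norm u"
        using tau_est[OF e, of u] by (simp add: inv0 E0)
    qed
    have g: "global_attractor ?N ?X (mild_sol (lam e) (phi e) alpha (f e)) (Att e)" by (rule Att_attr[OF e])
    have AttX: "\<And>a. a \<in> Att e \<Longrightarrow> ?X a" using attr_sub[OF g] .
    have Attne: "Att e \<noteq> {}" by (rule attr_nonempty[OF g]) (rule inX_zero)
    have delta: "?N (a - ?Q a) \<le> Cst * tau e" if a: "a \<in> Att e" for a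
    proof -
      have "?N (a - ?Q a) \<le> (1 + sqrt C1 * K) * lam e n powr (alpha - 1)"
        unfolding C1_def
      proof (rule core[OF op sm l0 _ alpha(2)])
        show "0 \<le> alpha" using alpha(1) by simp
        show "\<And>v. ?X v \<Longrightarrow> norm (f e v) \<le> K" by (rule Kf[OF e])
        show "?X a" by (rule AttX[OF a])
        fix t :: real assume t: "0 \<le> t"
        obtain b u where b: "b \<in> Att e" and u: "mild_sol (lam e) (phi e) alpha (f e) b u \<and> u t = a"
          using attr_back[OF g a t] by blast
        show "\<exists>b. ?X b \<and> ?N b \<le> Ka \<and> (\<exists>u. mild_sol (lam e) (phi e) alpha (f e) b u \<and> u t = a)"
          using b u AttX[OF b] Ka[OF e b] by blast
      qed
      also have "\<dots> \<le> Cst * tau e" unfolding Cst_def[symmetric] using spec Cst0 by (simp add: mult_left_mono)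
      finally show ?thesis .
    qed
    have EX: "\<And>w. ?X (E e w)" by (rule E_range[OF e])
    have QX: "\<And>x. ?X (?Q x)" by (rule inX_Q[OF op])
    have hd: "hausd ?N (Att e) (E e ` Att0) \<le> Cst * tau e + hausd ?N (?Q ` Att e) (E e ` Att0)"
    proof (rule hausd_tri)
      show "Att e \<noteq> {}" by (rule Attne)
      show "E e ` Att0 \<noteq> {}" using Att0ne by simp
      fix x y assume x: "x \<in> Att e" and y: "y \<in> E e ` Att0"
      then obtain w where w: "y = E e w" by blast
      show "?N (x - y) \<le> Cst * tau e + ?N (?Q x - y)"
        using N_diff_tri[OF AttX[OF x] QX[of x] EX[of w]] delta[OF x] w by simp
      show "0 \<le> ?N (x - y)" using N_nonneg[OF inX_diff[OF AttX[OF x] EX]] w by simp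
      show "0 \<le> ?N (?Q x - y)" using N_nonneg[OF inX_diff[OF QX EX]] w by simp
    next
      obtain w0 where w0: "w0 \<in> Att0" using Att0ne by blast
      show "bdd_above ((\<lambda>x. INF y\<in>E e ` Att0. ?N (?Q x - y)) ` Att e)"
      proof (rule bdd_aboveI2)
        fix x assume x: "x \<in> Att e"
        have "(INF y\<in>E e ` Att0. ?N (?Q x - y)) \<le> ?N (?Q x - E e w0)"
          by (rule cINF_lower) (use w0 in \<open>auto intro!: bdd_belowI2 N_nonneg inX_diff QX EX\<close>)
        also have "\<dots> \<le> ?N (?Q x) + ?N (E e w0)" by (rule N_diff_le[OF QX EX])
        also have "\<dots> \<le> Ka + ?N (E e w0)" using order_trans[OF N_Q_le[OF op AttX[OF x]] Ka[OF e x]] by simp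
        finally show "(INF y\<in>E e ` Att0. ?N (?Q x - y)) \<le> Ka + ?N (E e w0)" .
      qed
    next
      obtain x0 where x0: "x0 \<in> Att e" using Attne by blast
      show "bdd_above ((\<lambda>y. INF x\<in>Att e. ?N (?Q x - y)) ` (E e ` Att0))"
      proof (rule bdd_aboveI2)
        fix y assume y: "y \<in> E e ` Att0"
        then obtain w where w: "w \<in> Att0" "y = E e w" by blast
        have "(INF x\<in>Att e. ?N (?Q x - y)) \<le> ?N (?Q x0 - y)"
          by (rule cINF_lower) (use x0 w in \<open>auto intro!: bdd_belowI2 N_nonneg inX_diff QX EX\<close>)
        also have "\<dots> \<le> ?N (?Q x0) + ?N y" unfolding w(2) by (rule N_diff_le[OF QX EX])
        also have "\<dots> \<le> Ka + max KE 0 * R"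
        proof -
          have "?N (?Q x0) \<le> Ka" using order_trans[OF N_Q_le[OF op AttX[OF x0]] Ka[OF e x0]] by simp
          moreover have "?N y \<le> max KE 0 * R"
          proof -
            have "?N y \<le> KE * norm w" using KE[OF e] w(2) by simp
            also have "\<dots> \<le> max KE 0 * norm w" by (simp add: mult_right_mono)
            also have "\<dots> \<le> max KE 0 * R" using R[OF w(1)] by (simp add: mult_left_mono)
            finally show ?thesis .
          qed
          ultimately show ?thesis by simp
        qed
        finally show "(INF x\<in>Att e. ?N (?Q x - y)) \<le> Ka + max KE 0 * R" .
      qed
    qed
    have rho0: "0 \<le> rho e" using mono_onD[OF rho_mono, of 0 e] e rho0 by auto
    have "Cst * tau e \<le> Cst * (tau e + rho e)" using rho0 Cst0 by (simp add: mult_left_mono)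
    then show "hausd ?N (Att e) (E e ` Att0) \<le> Cst * (tau e + rho e) + hausd ?N (?Q ` Att e) (E e ` Att0)"
      using hd by simp
  qed
qed

end
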